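(* Let $n\ge2$ and $0\le k<n$. The number of ASM-recurrent configurations $c$ on the fan graph $F_n$ with $\mathrm{level}(c)=k$ is $$\sum_{r=0}^{n-k-1}\binom{n-k-1}{r}\binom{r+k}{r}.$$
   Context: $F_n$: path on $[n]$ (edges $\{i,i+1\}$) plus a sink $0$ adjacent to all of $[n]$. Sandpile setting: configurations $c\in\mathbb{Z}_{\ge0}^n$, stable iff $c_i<\deg(i)$ (on $F_n$: $c\in\{0,1,2\}^n$, $c_1,c_n\le1$). ASM: an unstable vertex loses $\deg(i)$ grains and sends one to each neighbour (grains to the sink vanish); Markov chain adds a grain at a random vertex (fully supported distribution) and stabilises; ASM-recurrent = recurrent state. Known: stable $c$ on $F_n$ is ASM-recurrent iff for all $i<j$ with $c_i=c_j=0$ some $i<k<j$ has $c_k=2$. $\mathrm{level}(c)=\sum_i c_i-(n-1)$. *)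

theory Defs
  imports Main
begin

text \<open>Fan graph F_n: vertices 1..n on a path, plus sink 0 adjacent to all of 1..n.
  Configurations are functions nat => nat supported on {1..n}.\<close>

definition fan_adj :: "nat \<Rightarrow> nat \<Rightarrow> nat \<Rightarrow> bool" where
  "fan_adj n i j \<longleftrightarrow> i \<in> {0..n} \<and> j \<in> {0..n} \<and> i \<noteq> j \<and>
     (i = 0 \<or> j = 0 \<or> j = i + 1 \<or> i = j + 1)"

definition fan_deg :: "nat \<Rightarrow> nat \<Rightarrow> nat" where
  "fan_deg n i = card {j. fan_adj n i j}"

definition is_config :: "nat \<Rightarrow> (nat \<Rightarrow> nat) \<Rightarrow> bool" where
  "is_config n c \<longleftrightarrow> (\<forall>i. i \<notin> {1..n} \<longrightarrow> c i = 0)"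

definition stable :: "nat \<Rightarrow> (nat \<Rightarrow> nat) \<Rightarrow> bool" where
  "stable n c \<longleftrightarrow> is_config n c \<and> (\<forall>i\<in>{1..n}. c i < fan_deg n i)"

text \<open>Toppling an unstable non-sink vertex i: it loses deg(i) grains and each
  non-sink neighbour gains one (grains sent to the sink vanish).\<close>
definition topple :: "nat \<Rightarrow> (nat \<Rightarrow> nat) \<Rightarrow> (nat \<Rightarrow> nat) \<Rightarrow> bool" where
  "topple n c d \<longleftrightarrow> (\<exists>i\<in>{1..n}. fan_deg n i \<le> c i \<and>
     d = (\<lambda>j. if j = i then c i - fan_deg n i
               else if j \<in> {1..n} \<and> fan_adj n i j then c j + 1 else c j))"

definition add_grain :: "(nat \<Rightarrow> nat) \<Rightarrow> nat \<Rightarrow> nat \<Rightarrow> nat" where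
  "add_grain c i = c(i := c i + 1)"

text \<open>One step of the ASM Markov chain (fully supported distribution, so every
  vertex may receive the grain): add a grain at some vertex i and stabilise.\<close>
definition asm_step :: "nat \<Rightarrow> (nat \<Rightarrow> nat) \<Rightarrow> (nat \<Rightarrow> nat) \<Rightarrow> bool" where
  "asm_step n c d \<longleftrightarrow> stable n c \<and> stable n d \<and>
     (\<exists>i\<in>{1..n}. (topple n)\<^sup>*\<^sup>* (add_grain c i) d)"

text \<open>Recurrent state of the (finite) Markov chain on stable configurations:
  every state reachable from c can reach c back.\<close>
definition asm_recurrent :: "nat \<Rightarrow> (nat \<Rightarrow> nat) \<Rightarrow> bool" where
  "asm_recurrent n c \<longleftrightarrow> stable n c \<and>
     (\<forall>d. (asm_step n)\<^sup>*\<^sup>* c d \<longrightarrow> (asm_step n)\<^sup>*\<^sup>* d c)"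

definition level :: "nat \<Rightarrow> (nat \<Rightarrow> nat) \<Rightarrow> int" where
  "level n c = int (\<Sum>i\<in>{1..n}. c i) - (int n - 1)"

end

theory Submission
  imports Defs
begin


lemma adj_set:
  assumes "n \<ge> 2" "i \<in> {1..n}"
  shows "{j. fan_adj n i j} = (if i = 1 then {0,2} else if i = n then {0, n-1} else {0, i-1, i+1})"
  using assms by (auto simp: fan_adj_def)

lemma deg_eq:
  assumes "n \<ge> 2" "i \<in> {1..n}"
  shows "fan_deg n i = (if i = 1 \<or> i = n then 2 else 3)"
  using assms unfolding fan_deg_def adj_set[OF assms] by auto

lemma adj_in:
  assumes "i \<in> {1..n}" "j \<in> {1..n}"
  shows "fan_adj n i j \<longleftrightarrow> (j = i + 1 \<or> i = j + 1)"
  using assms by (auto simp: fan_adj_def)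

definition pg :: "nat \<Rightarrow> (nat \<Rightarrow> nat) \<Rightarrow> bool" where
  "pg n c \<longleftrightarrow> (\<forall>i j. 1 \<le> i \<longrightarrow> i < j \<longrightarrow> j \<le> n \<longrightarrow> c i = 0 \<longrightarrow> c j = 0 \<longrightarrow>
      (\<exists>k. i < k \<and> k < j \<and> 2 \<le> c k))"

lemma topple_explicit:
  assumes "topple n c d"
  obtains v where "v \<in> {1..n}" "fan_deg n v \<le> c v" "d v = c v - fan_deg n v"
    "\<And>j. j \<noteq> v \<Longrightarrow> d j = (if j \<in> {1..n} \<and> (j = v + 1 \<or> v = j + 1) then c j + 1 else c j)"
proof -
  from assms obtain v where v: "v \<in> {1..n}" "fan_deg n v \<le> c v"
    and d: "d = (\<lambda>j. if j = v then c v - fan_deg n v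
               else if j \<in> {1..n} \<and> fan_adj n v j then c j + 1 else c j)"
    unfolding topple_def by blast
  show ?thesis
  proof (rule that[OF v])
    show "d v = c v - fan_deg n v" using d by simp
    fix j assume "j \<noteq> v"
    then show "d j = (if j \<in> {1..n} \<and> (j = v + 1 \<or> v = j + 1) then c j + 1 else c j)"
      using d v adj_in[of v n j] by auto
  qed
qed

lemma pg_mono:
  assumes "pg n c" "\<And>i. c i \<le> d i"
  shows "pg n d"
  unfolding pg_def
proof (intro allI impI)
  fix i j assume h: "1 \<le> i" "i < j" "j \<le> n" "d i = 0" "d j = 0"
  then have "c i = 0" "c j = 0" using assms(2)[of i] assms(2)[of j] by auto
  then obtain k where "i < k" "k < j" "2 \<le> c k" using assms(1) h unfolding pg_def by blast
  then show "\<exists>k>i. k < j \<and> 2 \<le> d k" using assms(2)[of k] by (intro exI[of _ k]) auto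
qed

lemma pg_topple:
  assumes "topple n c d" "pg n c"
  shows "pg n d"
proof -
  obtain v where v: "v \<in> {1..n}" "fan_deg n v \<le> c v" "d v = c v - fan_deg n v"
    and dj: "\<And>j. j \<noteq> v \<Longrightarrow> d j = (if j \<in> {1..n} \<and> (j = v + 1 \<or> v = j + 1) then c j + 1 else c j)"
    using topple_explicit[OF assms(1)] by blast
  have ge: "\<And>j. j \<noteq> v \<Longrightarrow> c j \<le> d j" using dj by auto
  have nb1: "\<And>j. j \<in> {1..n} \<Longrightarrow> j = v + 1 \<Longrightarrow> d j = c j + 1" using dj by auto
  have nb2: "\<And>j. j \<in> {1..n} \<Longrightarrow> v = j + 1 \<Longrightarrow> d j = c j + 1" using dj by auto
  have P: "\<And>i j. 1 \<le> i \<Longrightarrow> i < j \<Longrightarrow> j \<le> n \<Longrightarrow> c i = 0 \<Longrightarrow> c j = 0 \<Longrightarrow>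
      \<exists>k. i < k \<and> k < j \<and> 2 \<le> c k" using assms(2) unfolding pg_def by blast
  show ?thesis unfolding pg_def
  proof (intro allI impI)
    fix i j assume h: "1 \<le> i" "i < j" "j \<le> n" "d i = 0" "d j = 0"
    show "\<exists>k>i. k < j \<and> 2 \<le> d k"
    proof (cases "i = v")
      case True
      then have "j \<noteq> v" using h by auto
      have "j \<noteq> v + 1" using nb1[of j] h \<open>i = v\<close> by auto
      then have j2: "v + 1 < j" using h True by auto
      have cj: "c j = 0" using ge[OF \<open>j \<noteq> v\<close>] h by auto
      show ?thesis
      proof (cases "c (v+1) = 0")
        case True
        then obtain k where "v + 1 < k" "k < j" "2 \<le> c k" using P[of "v+1" j] j2 h cj by auto
        then show ?thesis using ge[of k] \<open>i = v\<close> by (intro exI[of _ k]) auto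
      next
        case False
        then show ?thesis using nb1[of "v+1"] j2 h \<open>i = v\<close> by (intro exI[of _ "v+1"]) auto
      qed
    next
      case iv: False
      show ?thesis
      proof (cases "j = v")
        case True
        have "i \<noteq> v - 1" using nb2[of i] h \<open>j = v\<close> by auto
        then have i2: "i < v - 1" "1 \<le> v - 1" using h True by auto
        have ci: "c i = 0" using ge[OF iv] h by auto
        show ?thesis
        proof (cases "c (v-1) = 0")
          case True
          moreover have "v - 1 \<le> n" using v by auto
          ultimately obtain k where "i < k" "k < v - 1" "2 \<le> c k" using P[of i "v-1"] i2 h ci by blast
          moreover have "k \<noteq> v" using \<open>k < v - 1\<close> by linarith
          ultimately show ?thesis using ge[of k] \<open>j = v\<close> by (intro exI[of _ k]) auto
        next
          case False
          then show ?thesis using nb2[of "v-1"] i2 h \<open>j = v\<close> v by (intro exI[of _ "v-1"]) auto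
        qed
      next
        case jv: False
        have ci: "c i = 0" using ge[OF iv] h by auto
        have cj: "c j = 0" using ge[OF jv] h by auto
        obtain k where k: "i < k" "k < j" "2 \<le> c k" using P[of i j] h ci cj by auto
        show ?thesis
        proof (cases "k = v")
          case False
          then show ?thesis using k ge[of k] by (intro exI[of _ k]) auto
        next
          case True
          have "i \<noteq> v - 1" using nb2[of i] h iv k True by auto
          then have i2: "i < v - 1" "1 \<le> v - 1" using h k True by auto
          show ?thesis
          proof (cases "c (v-1) = 0")
            case True
            moreover have "v - 1 \<le> n" using v by auto
            ultimately obtain k' where "i < k'" "k' < v - 1" "2 \<le> c k'" using P[of i "v-1"] i2 h ci by blast
            moreover have "k' \<noteq> v" using \<open>k' < v - 1\<close> by linarith
            ultimately show ?thesis using ge[of k'] k \<open>k = v\<close> by (intro exI[of _ k']) auto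
          next
            case False
            then show ?thesis using nb2[of "v-1"] i2 h k \<open>k = v\<close> v by (intro exI[of _ "v-1"]) auto
          qed
        qed
      qed
    qed
  qed
qed


definition cmax :: "nat \<Rightarrow> nat \<Rightarrow> nat" where
  "cmax n = (\<lambda>i. if i \<in> {1..n} then fan_deg n i - 1 else 0)"

lemma deg_ge2: "n \<ge> 2 \<Longrightarrow> i \<in> {1..n} \<Longrightarrow> 2 \<le> fan_deg n i"
  using deg_eq[of n i] by auto

lemma deg_ge2': "n \<ge> 2 \<Longrightarrow> 1 \<le> i \<Longrightarrow> i \<le> n \<Longrightarrow> 2 \<le> fan_deg n i"
  using deg_eq[of n i] by auto

lemma stable_cmax: "n \<ge> 2 \<Longrightarrow> stable n (cmax n)"
  unfolding stable_def is_config_def cmax_def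
proof (intro conjI allI impI ballI)
  fix i assume "n \<ge> 2" "i \<in> {1..n}"
  then have "2 \<le> fan_deg n i" using deg_ge2 by blast
  then show "(if i \<in> {1..n} then fan_deg n i - 1 else 0) < fan_deg n i" by auto
qed auto

lemma pg_cmax: "n \<ge> 2 \<Longrightarrow> pg n (cmax n)"
  unfolding pg_def cmax_def using deg_ge2[of n] by fastforce

lemma pg_add_grain: "pg n c \<Longrightarrow> pg n (add_grain c i)"
  by (rule pg_mono) (auto simp: add_grain_def)

lemma pg_topples: "(topple n)\<^sup>*\<^sup>* c d \<Longrightarrow> pg n c \<Longrightarrow> pg n d"
  by (induction rule: rtranclp_induct) (auto intro: pg_topple)

lemma pg_step: "asm_step n c d \<Longrightarrow> pg n c \<Longrightarrow> pg n d"
  unfolding asm_step_def using pg_topples pg_add_grain by blast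

lemma pg_steps: "(asm_step n)\<^sup>*\<^sup>* c d \<Longrightarrow> pg n c \<Longrightarrow> pg n d"
  by (induction rule: rtranclp_induct) (auto intro: pg_step)

lemma stable_steps: "(asm_step n)\<^sup>*\<^sup>* c d \<Longrightarrow> stable n c \<Longrightarrow> stable n d"
  by (induction rule: rtranclp_induct) (auto simp: asm_step_def)

lemma add_step:
  assumes "stable n c" "i \<in> {1..n}" "c i + 1 < fan_deg n i"
  shows "asm_step n c (add_grain c i)"
proof -
  have "stable n (add_grain c i)"
    using assms unfolding stable_def is_config_def add_grain_def by auto
  then show ?thesis using assms unfolding asm_step_def by blast
qed

lemma sum_less:
  fixes f g :: "nat \<Rightarrow> nat"
  assumes "\<And>i. i \<in> {1..n} \<Longrightarrow> f i \<le> g i" "a \<in> {1..n}" "f a < g a"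
  shows "(\<Sum>i\<in>{1..n}. f i) < (\<Sum>i\<in>{1..n}. g i)"
  using assms by (intro sum_strict_mono_ex1) auto

lemma up_steps:
  assumes "stable n e" "stable n d" "\<And>i. e i \<le> d i"
  shows "(asm_step n)\<^sup>*\<^sup>* e d"
  using assms
proof (induction "\<Sum>i\<in>{1..n}. d i - e i" arbitrary: e rule: less_induct)
  case less
  show ?case
  proof (cases "\<exists>i\<in>{1..n}. e i < d i")
    case False
    then have "e = d" using less.prems unfolding stable_def is_config_def
      by (metis le_neq_implies_less ext)
    then show ?thesis by simp
  next
    case True
    then obtain i where i: "i \<in> {1..n}" "e i < d i" by blast
    have "d i < fan_deg n i" using less.prems i unfolding stable_def by auto
    then have st: "asm_step n e (add_grain e i)" using add_step[OF less.prems(1) i(1)] i by auto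
    then have st2: "stable n (add_grain e i)" unfolding asm_step_def by blast
    have le: "\<And>j. add_grain e i j \<le> d j" using less.prems(3) i by (auto simp: add_grain_def)
    have "(\<Sum>j\<in>{1..n}. d j - add_grain e i j) < (\<Sum>j\<in>{1..n}. d j - e j)"
      apply (rule sum_less[OF _ i(1)])
      using i less.prems(3) by (auto simp: add_grain_def)
    then have "(asm_step n)\<^sup>*\<^sup>* (add_grain e i) d" using less.hyps st2 less.prems(2) le by blast
    then show ?thesis using st by (meson converse_rtranclp_into_rtranclp)
  qed
qed

lemma le_cmax: "n \<ge> 2 \<Longrightarrow> stable n c \<Longrightarrow> c i \<le> cmax n i"
proof (cases "i \<in> {1..n}")
  case True
  assume "stable n c"
  then have "c i < fan_deg n i" using True unfolding stable_def by blast
  then show ?thesis using True unfolding cmax_def by auto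
next
  case False
  assume "stable n c"
  then have "c i = 0" using False unfolding stable_def is_config_def by blast
  then show ?thesis by simp
qed

lemma reach_cmax: "n \<ge> 2 \<Longrightarrow> stable n c \<Longrightarrow> (asm_step n)\<^sup>*\<^sup>* c (cmax n)"
  using up_steps stable_cmax le_cmax by blast

lemma up_closed:
  assumes "n \<ge> 2" "(asm_step n)\<^sup>*\<^sup>* (cmax n) e" "stable n d" "\<And>i. e i \<le> d i"
  shows "(asm_step n)\<^sup>*\<^sup>* (cmax n) d"
proof -
  have "stable n e" using stable_steps[OF assms(2) stable_cmax[OF assms(1)]] .
  then show ?thesis using up_steps[of n e d] assms by (meson rtranclp_trans)
qed


lemma topple_intro:
  assumes "i \<in> {1..n}" "fan_deg n i \<le> x i"
    "\<And>j. y j = (if j = i then x i - fan_deg n i else if j \<in> {1..n} \<and> (j = i+1 \<or> i = j+1) then x j + 1 else x j)"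
  shows "topple n x y"
  unfolding topple_def
proof (intro bexI[OF _ assms(1)] conjI)
  show "fan_deg n i \<le> x i" by fact
  show "y = (\<lambda>j. if j = i then x i - fan_deg n i
               else if j \<in> {1..n} \<and> fan_adj n i j then x j + 1 else x j)"
  proof
    fix j show "y j = (if j = i then x i - fan_deg n i
               else if j \<in> {1..n} \<and> fan_adj n i j then x j + 1 else x j)"
      using assms(3)[of j] adj_in[OF assms(1), of j] by auto
  qed
qed

lemma avalanche:
  assumes n2: "n \<ge> 2" and z: "1 \<le> z" "z \<le> n" and st: "stable n c"
   and mx: "\<And>j. 1 \<le> j \<Longrightarrow> j \<le> z \<Longrightarrow> c j = fan_deg n j - 1"
   and nx: "z < n \<Longrightarrow> c (z+1) + 2 \<le> fan_deg n (z+1)"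
  shows "asm_step n c (\<lambda>j. if 1 \<le> j \<and> j < z then 1 else if j = z then 0
           else if j = z+1 \<and> z+1 \<le> n then c j + 1 else c j)"
proof -
  define s where "s k = (\<lambda>j. if 1 \<le> j \<and> j < k then 1 else if j = k then 0
           else if j = k+1 \<and> k+1 \<le> n then c j + 1 else (c j::nat))" for k
  have dg: "\<And>j. 1 \<le> j \<Longrightarrow> j \<le> n \<Longrightarrow> 2 \<le> fan_deg n j" using deg_ge2' n2 by blast
  have c0: "\<And>j. \<not> 1 \<le> j \<Longrightarrow> c j = 0" using st unfolding stable_def is_config_def by auto
  have cbig: "\<And>j. n < j \<Longrightarrow> c j = 0" using st unfolding stable_def is_config_def by auto
  have main: "1 \<le> k \<Longrightarrow> k \<le> z \<Longrightarrow> (topple n)\<^sup>*\<^sup>* (add_grain c 1) (s k)" for k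
  proof (induction k)
    case 0
    then show ?case by simp
  next
    case (Suc k)
    show ?case
    proof (cases "k = 0")
      case True
      have d1: "2 \<le> fan_deg n 1" using dg n2 by auto
      have c1: "c 1 = fan_deg n 1 - 1" using mx[of 1] z by auto
      have "topple n (add_grain c 1) (s 1)"
      proof (rule topple_intro[of 1])
        show "1 \<in> {1..n}" using n2 by auto
        show "fan_deg n 1 \<le> add_grain c 1 1" using c1 d1 by (simp add: add_grain_def)
        fix j show "s 1 j = (if j = 1 then add_grain c 1 1 - fan_deg n 1
               else if j \<in> {1..n} \<and> (j = 1 + 1 \<or> 1 = j + 1) then add_grain c 1 j + 1 else add_grain c 1 j)"
          using c1 d1 n2 by (auto simp: s_def add_grain_def)
      qed
      then show ?thesis using True by simp
    next
      case False
      then have ih: "(topple n)\<^sup>*\<^sup>* (add_grain c 1) (s k)" using Suc by auto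
      have kn: "k + 1 \<le> n" "1 \<le> k" using Suc.prems z False by auto
      have d1: "2 \<le> fan_deg n (k+1)" using dg kn by auto
      have c1: "c (k+1) = fan_deg n (k+1) - 1" using mx[of "k+1"] Suc.prems by auto
      have "topple n (s k) (s (Suc k))"
      proof (rule topple_intro[of "k+1"])
        show "k+1 \<in> {1..n}" using kn by auto
        show "fan_deg n (k+1) \<le> s k (k+1)" using c1 d1 kn by (simp add: s_def)
        fix j show "s (Suc k) j = (if j = k+1 then s k (k+1) - fan_deg n (k+1)
               else if j \<in> {1..n} \<and> (j = k+1 + 1 \<or> k+1 = j + 1) then s k j + 1 else s k j)"
          using c1 d1 kn by (auto simp: s_def)
      qed
      then show ?thesis using ih by simp
    qed
  qed
  have stz: "stable n (s z)"
    unfolding stable_def is_config_def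
  proof (intro conjI allI impI ballI)
    fix i assume "i \<notin> {1..n}"
    then show "s z i = 0" using c0 cbig z by (auto simp: s_def)
  next
    fix i assume i: "i \<in> {1..n}"
    have "c i < fan_deg n i" using st i unfolding stable_def by blast
    then show "s z i < fan_deg n i" using dg[of i] i nx z by (auto simp: s_def)
  qed
  have "asm_step n c (s z)"
    unfolding asm_step_def using st stz main[of z] z n2 by auto
  then show ?thesis by (simp add: s_def)
qed


definition mu :: "nat \<Rightarrow> (nat \<Rightarrow> nat) \<Rightarrow> nat" where
  "mu n c = (\<Sum>j\<in>{1..n}. if c j = 0 then n + 1 - j else 0)"

lemma sum_split2:
  fixes g :: "nat \<Rightarrow> nat"
  assumes "1 \<le> z" "z < n"
  shows "sum g {1..n} = g z + g (z+1) + sum g ({1..n} - {z, z+1})"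
proof -
  have "{1..n} = insert z (insert (z+1) ({1..n} - {z,z+1}))" using assms by auto
  then have "sum g {1..n} = sum g (insert z (insert (z+1) ({1..n} - {z,z+1})))" by simp
  also have "\<dots> = g z + g (z+1) + sum g ({1..n} - {z, z+1})" by simp
  finally show ?thesis .
qed

lemma sum_split1:
  fixes g :: "nat \<Rightarrow> nat"
  assumes "1 \<le> z" "z \<le> n"
  shows "sum g {1..n} = g z + sum g ({1..n} - {z})"
  using assms by (simp add: sum.remove)

lemma good_reach:
  assumes "n \<ge> 2" "stable n c" "pg n c"
  shows "(asm_step n)\<^sup>*\<^sup>* (cmax n) c"
  using assms(2,3)
proof (induction "mu n c" arbitrary: c rule: less_induct)
  case less
  have n2: "n \<ge> 2" by fact
  have dg: "\<And>j. 1 \<le> j \<Longrightarrow> j \<le> n \<Longrightarrow> 2 \<le> fan_deg n j" using deg_ge2' n2 by blast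
  have cst: "\<And>j. j \<in> {1..n} \<Longrightarrow> c j < fan_deg n j" using less.prems unfolding stable_def by blast
  have cout: "\<And>j. j \<notin> {1..n} \<Longrightarrow> c j = 0" using less.prems unfolding stable_def is_config_def by blast
  show ?case
  proof (cases "\<exists>j\<in>{1..n}. c j = 0")
    case False
    have mx: "\<And>j. 1 \<le> j \<Longrightarrow> j \<le> n \<Longrightarrow> cmax n j = fan_deg n j - 1" by (simp add: cmax_def)
    have av: "asm_step n (cmax n) (\<lambda>j. if 1 \<le> j \<and> j < n then 1 else if j = n then 0
           else if j = n+1 \<and> n+1 \<le> n then cmax n j + 1 else cmax n j)"
      (is "asm_step n _ ?r")
      by (rule avalanche[OF n2 _ _ stable_cmax[OF n2] mx]) (use n2 in auto)
    have le: "\<And>j. ?r j \<le> c j"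
    proof -
      fix j
      have "\<And>j. 1 \<le> j \<Longrightarrow> j \<le> n \<Longrightarrow> 1 \<le> c j" using False by force
      then show "?r j \<le> c j"
        by (cases "j \<in> {1..n}") (auto simp: cmax_def not_less_eq_eq)
    qed
    show ?thesis
      by (rule up_closed[OF n2 _ less.prems(1) le]) (use av in blast)
  next
    case True
    define z where "z = (LEAST j. 1 \<le> j \<and> j \<le> n \<and> c j = 0)"
    have P: "\<And>i j. 1 \<le> i \<Longrightarrow> i < j \<Longrightarrow> j \<le> n \<Longrightarrow> c i = 0 \<Longrightarrow> c j = 0 \<Longrightarrow>
      \<exists>k. i < k \<and> k < j \<and> 2 \<le> c k" using less.prems(2) unfolding pg_def by blast
    from True obtain j0 where j0: "1 \<le> j0" "j0 \<le> n" "c j0 = 0" by auto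
    have zP: "1 \<le> z \<and> z \<le> n \<and> c z = 0" unfolding z_def
      by (rule LeastI[of _ j0]) (use j0 in blast)
    then have z1: "1 \<le> z" and zn: "z \<le> n" and cz: "c z = 0" by auto
    have before: "c j \<noteq> 0" if "1 \<le> j" "j < z" for j
    proof -
      have "\<not> (1 \<le> j \<and> j \<le> n \<and> c j = 0)"
        using not_less_Least[of j "\<lambda>j. 1 \<le> j \<and> j \<le> n \<and> c j = 0"] that unfolding z_def by blast
      then show ?thesis using that zn by auto
    qed
    have after: "z < n \<Longrightarrow> c (z+1) \<noteq> 0"
    proof
      assume "z < n" "c (z+1) = 0"
      then obtain k where "z < k" "k < z + 1" using P[of z "z+1"] z1 cz by auto
      then show False by auto
    qed
    define c' where "c' = (\<lambda>j. if 1 \<le> j \<and> j \<le> z then fan_deg n j - 1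
       else if j = z+1 \<and> z+1 \<le> n then c j - 1 else c j)"
    have st': "stable n c'"
      unfolding stable_def is_config_def
    proof (intro conjI allI impI ballI)
      fix i assume "i \<notin> {1..n}"
      then show "c' i = 0" using cout[of i] zn by (auto simp: c'_def)
    next
      fix i assume i: "i \<in> {1..n}"
      then show "c' i < fan_deg n i" using cst[of i] dg[of i] by (auto simp: c'_def)
    qed
    have pg': "pg n c'"
      unfolding pg_def
    proof (intro allI impI)
      fix i j assume h: "1 \<le> i" "i < j" "j \<le> n" "c' i = 0" "c' j = 0"
      have iz: "z < i"
      proof (rule ccontr)
        assume "\<not> z < i"
        then have "c' i = fan_deg n i - 1" using h by (auto simp: c'_def)
        then show False using dg[of i] h by auto
      qed
      have cj: "c j = 0" using h iz by (auto simp: c'_def split: if_splits)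
      show "\<exists>k>i. k < j \<and> 2 \<le> c' k"
      proof (cases "i = z + 1")
        case True
        obtain k where k: "z < k" "k < j" "2 \<le> c k" using P[of z j] z1 cz cj h iz by auto
        have "k \<noteq> z + 1" using k h True by (auto simp: c'_def)
        then show ?thesis using k True by (intro exI[of _ k]) (auto simp: c'_def)
      next
        case False
        then have ci: "c i = 0" using h iz by (auto simp: c'_def)
        obtain k where k: "i < k" "k < j" "2 \<le> c k" using P[of i j] ci cj h by auto
        then show ?thesis using iz by (intro exI[of _ k]) (auto simp: c'_def)
      qed
    qed
    have mu': "mu n c' < mu n c"
    proof (cases "z < n")
      case True
      let ?f = "\<lambda>c j. if c j = 0 then n + 1 - j else (0::nat)"
      have eq: "sum (?f c') ({1..n} - {z, z+1}) = sum (?f c) ({1..n} - {z, z+1})"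
      proof (rule sum.cong)
        fix j assume j: "j \<in> {1..n} - {z, z+1}"
        show "?f c' j = ?f c j"
        proof (cases "j < z")
          case True
          then show ?thesis using j before[of j] dg[of j] by (auto simp: c'_def)
        next
          case False
          then show ?thesis using j by (auto simp: c'_def)
        qed
      qed simp
      have a: "?f c' z = 0" using dg[of z] z1 zn by (auto simp: c'_def)
      have b: "?f c' (z+1) \<le> n - z" by auto
      have c: "?f c z = n + 1 - z" using cz by auto
      have d: "?f c (z+1) = 0" using after True by auto
      show ?thesis unfolding mu_def
        using sum_split2[OF z1 True, of "?f c"] sum_split2[OF z1 True, of "?f c'"] eq a b c d True
        by linarith
    next
      case False
      then have zn': "z = n" using zn by auto
      let ?f = "\<lambda>c j. if c j = 0 then n + 1 - j else (0::nat)"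
      have eq: "sum (?f c') ({1..n} - {z}) = sum (?f c) ({1..n} - {z})"
      proof (rule sum.cong)
        fix j assume j: "j \<in> {1..n} - {z}"
        then show "?f c' j = ?f c j" using zn' before[of j] dg[of j] by (auto simp: c'_def)
      qed simp
      have a: "?f c' z = 0" using dg[of z] z1 zn by (auto simp: c'_def)
      have c: "?f c z = n + 1 - z" using cz by auto
      show ?thesis unfolding mu_def
        using sum_split1[OF z1 zn, of "?f c"] sum_split1[OF z1 zn, of "?f c'"] eq a c zn
        by linarith
    qed
    have R': "(asm_step n)\<^sup>*\<^sup>* (cmax n) c'" using less.hyps[OF mu' st' pg'] .
    have mx: "\<And>j. 1 \<le> j \<Longrightarrow> j \<le> z \<Longrightarrow> c' j = fan_deg n j - 1" by (simp add: c'_def)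
    have nx: "z < n \<Longrightarrow> c' (z+1) + 2 \<le> fan_deg n (z+1)"
    proof -
      assume zl: "z < n"
      have "c (z+1) < fan_deg n (z+1)" using cst[of "z+1"] zl by auto
      then show ?thesis using after[OF zl] zl by (auto simp: c'_def)
    qed
    have av: "asm_step n c' (\<lambda>j. if 1 \<le> j \<and> j < z then 1 else if j = z then 0
           else if j = z+1 \<and> z+1 \<le> n then c' j + 1 else c' j)"
      (is "asm_step n _ ?r")
      by (rule avalanche[OF n2 z1 zn st' mx nx])
    have le: "\<And>j. ?r j \<le> c j"
    proof -
      fix j show "?r j \<le> c j"
        using before[of j] after cz by (auto simp: c'_def)
    qed
    show ?thesis
      by (rule up_closed[OF n2 _ less.prems(1) le]) (use av R' in auto)
  qed
qed

lemma recurrent_iff: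
  assumes "n \<ge> 2"
  shows "asm_recurrent n c \<longleftrightarrow> stable n c \<and> pg n c"
proof
  assume a: "asm_recurrent n c"
  then have st: "stable n c" unfolding asm_recurrent_def by blast
  have "(asm_step n)\<^sup>*\<^sup>* c (cmax n)" using reach_cmax[OF assms st] .
  then have "(asm_step n)\<^sup>*\<^sup>* (cmax n) c" using a unfolding asm_recurrent_def by blast
  then have "pg n c" using pg_steps pg_cmax[OF assms] by blast
  then show "stable n c \<and> pg n c" using st by blast
next
  assume a: "stable n c \<and> pg n c"
  have R: "(asm_step n)\<^sup>*\<^sup>* (cmax n) c" using good_reach[OF assms] a by blast
  show "asm_recurrent n c" unfolding asm_recurrent_def
  proof (intro conjI allI impI)
    show "stable n c" using a by blast
    fix d assume "(asm_step n)\<^sup>*\<^sup>* c d"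
    then have "stable n d" using stable_steps a by blast
    then have "(asm_step n)\<^sup>*\<^sup>* d (cmax n)" using reach_cmax[OF assms] by blast
    then show "(asm_step n)\<^sup>*\<^sup>* d c" using R by (meson rtranclp_trans)
  qed
qed



definition S :: "nat \<Rightarrow> nat \<Rightarrow> nat" where
  "S m k = (\<Sum>r\<le>m. (m choose r) * ((r + k) choose k))"
definition T :: "nat \<Rightarrow> nat \<Rightarrow> nat" where
  "T m k = (\<Sum>r\<le>m. (m choose r) * ((r + 1 + k) choose k))"

lemma S0: "S 0 k = 1" by (simp add: S_def)
lemma T00: "T 0 0 = 1" by (simp add: T_def)
lemma I3: "T m 0 = S m 0" by (simp add: S_def T_def)

lemma I2: "T m (Suc k) = S m (Suc k) + T m k"
proof -
  have "T m (Suc k) = (\<Sum>r\<le>m. (m choose r) * ((r + Suc k) choose Suc k) + (m choose r) * ((r + 1 + k) choose k))"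
    unfolding T_def by (intro sum.cong refl) (simp add: algebra_simps)
  also have "\<dots> = S m (Suc k) + T m k" unfolding S_def T_def by (simp add: sum.distrib)
  finally show ?thesis .
qed

lemma I1: "S (Suc m) k = S m k + T m k"
proof -
  have "S (Suc m) k = 1 + (\<Sum>r\<le>m. (Suc m choose Suc r) * ((Suc r + k) choose k))"
    unfolding S_def by (subst sum.atMost_Suc_shift) simp
  also have "\<dots> = 1 + (\<Sum>r\<le>m. (m choose Suc r) * ((Suc r + k) choose k)) + T m k"
    unfolding T_def by (simp add: sum.distrib algebra_simps)
  also have "1 + (\<Sum>r\<le>m. (m choose Suc r) * ((Suc r + k) choose k)) = S m k"
  proof -
    have "S m k = (\<Sum>r\<le>Suc m. (m choose r) * ((r + k) choose k))"
      unfolding S_def by simp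
    also have "\<dots> = 1 + (\<Sum>r\<le>m. (m choose Suc r) * ((Suc r + k) choose k))"
      by (subst sum.atMost_Suc_shift) simp
    finally show ?thesis by simp
  qed
  finally show ?thesis by simp
qed


fun valid :: "bool \<Rightarrow> nat list \<Rightarrow> bool" where
  "valid p [] = True"
| "valid p (x # w) = (if x = 0 then \<not> p \<and> valid True w else if x = 2 then valid False w else valid p w)"

definition G :: "bool \<Rightarrow> nat \<Rightarrow> nat \<Rightarrow> nat list set" where
  "G p n t = {w. length w = n \<and> (\<forall>x\<in>set w. x \<le> 2) \<and> valid p w \<and> last w \<noteq> 2 \<and> sum_list w = t}"

lemma G_finite: "finite (G p n t)"
proof -
  have "G p n t \<subseteq> {w. set w \<subseteq> {0..2} \<and> length w = n}" unfolding G_def by auto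
  moreover have "finite {w. set w \<subseteq> {0..2::nat} \<and> length w = n}"
    by (rule finite_lists_length_eq) simp
  ultimately show ?thesis by (rule finite_subset)
qed

lemma G_Suc_eq:
  assumes "1 \<le> n"
  shows "G p (Suc n) t = Cons 0 ` {w. \<not> p \<and> w \<in> G True n t} \<union> Cons 1 ` {w. 1 \<le> t \<and> w \<in> G p n (t-1)}
     \<union> Cons 2 ` {w. 2 \<le> t \<and> w \<in> G False n (t-2)}"
proof (intro set_eqI iffI)
  fix w assume wG: "w \<in> G p (Suc n) t"
  obtain x w' where w0: "w = x # w'" using wG by (cases w) (auto simp: G_def)
  have ne: "w' \<noteq> []" using wG w0 assms unfolding G_def by auto
  have w: "w = x # w'" "length w' = n" "x \<le> 2" "\<forall>y\<in>set w'. y \<le> 2"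
    "valid p (x # w')" "last w' \<noteq> 2" "x + sum_list w' = t"
    using wG w0 ne unfolding G_def by auto
  have "x = 0 \<or> x = 1 \<or> x = 2" using w(3) by auto
  then show "w \<in> Cons 0 ` {w. \<not> p \<and> w \<in> G True n t} \<union> Cons 1 ` {w. 1 \<le> t \<and> w \<in> G p n (t-1)}
     \<union> Cons 2 ` {w. 2 \<le> t \<and> w \<in> G False n (t-2)}"
    using w unfolding G_def by auto
next
  fix w assume "w \<in> Cons 0 ` {w. \<not> p \<and> w \<in> G True n t} \<union> Cons 1 ` {w. 1 \<le> t \<and> w \<in> G p n (t-1)}
     \<union> Cons 2 ` {w. 2 \<le> t \<and> w \<in> G False n (t-2)}"
  then show "w \<in> G p (Suc n) t" using assms unfolding G_def by (auto split: if_splits)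
qed

definition gc :: "bool \<Rightarrow> nat \<Rightarrow> nat \<Rightarrow> nat" where
  "gc p n t = card (G p n t)"

lemma card_Cons_img: "card (Cons x ` A) = card A"
  by (rule card_image) (simp add: inj_on_def)

lemma gc_Suc:
  assumes "1 \<le> n"
  shows "gc p (Suc n) t = (if p then 0 else gc True n t) + (if 1 \<le> t then gc p n (t-1) else 0)
     + (if 2 \<le> t then gc False n (t-2) else 0)"
proof -
  let ?A = "Cons 0 ` {w. \<not> p \<and> w \<in> G True n t}"
  let ?B = "Cons 1 ` {w. 1 \<le> t \<and> w \<in> G p n (t-1)}"
  let ?C = "Cons 2 ` {w. 2 \<le> t \<and> w \<in> G False n (t-2)}"
  have fA: "finite {w. \<not> p \<and> w \<in> G True n t}" by (rule finite_subset[OF _ G_finite]) auto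
  have fB: "finite {w. 1 \<le> t \<and> w \<in> G p n (t-1)}" by (rule finite_subset[OF _ G_finite]) auto
  have fC: "finite {w. 2 \<le> t \<and> w \<in> G False n (t-2)}" by (rule finite_subset[OF _ G_finite]) auto
  have "card (?A \<union> ?B \<union> ?C) = card (?A \<union> ?B) + card ?C"
    by (rule card_Un_disjoint) (use fA fB fC in auto)
  also have "card (?A \<union> ?B) = card ?A + card ?B"
    by (rule card_Un_disjoint) (use fA fB in auto)
  finally have "card (?A \<union> ?B \<union> ?C) = card ?A + card ?B + card ?C" .
  moreover have "card ?A = (if p then 0 else gc True n t)" unfolding card_Cons_img gc_def by auto
  moreover have "card ?B = (if 1 \<le> t then gc p n (t-1) else 0)" unfolding card_Cons_img gc_def by auto
  moreover have "card ?C = (if 2 \<le> t then gc False n (t-2) else 0)" unfolding card_Cons_img gc_def by auto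
  ultimately show ?thesis unfolding gc_def G_Suc_eq[OF assms] by simp
qed

lemma G1_True: "G True (Suc 0) t = (if t = 1 then {[1]} else {})"
  unfolding G_def by (auto simp: length_Suc_conv)

lemma G1_False: "G False (Suc 0) t = (if t \<le> 1 then {[t]} else {})"
  unfolding G_def by (auto simp: length_Suc_conv)

lemma valid_len: "valid p w \<Longrightarrow> length w \<le> sum_list w + (if p then 0 else 1)"
  by (induction p w rule: valid.induct) (auto split: if_splits)

lemma gc_low: "t + 1 < n \<Longrightarrow> gc False n t = 0"
proof -
  assume a: "t + 1 < n"
  have "G False n t = {}" using valid_len[of False] a unfolding G_def by fastforce
  then show ?thesis by (simp add: gc_def)
qed

definition Sp :: "nat \<Rightarrow> nat \<Rightarrow> nat" where
  "Sp n j = (if j < n then S (n - j - 1) j else 0)"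
definition Tq :: "nat \<Rightarrow> nat \<Rightarrow> nat" where
  "Tq n j = (if j < n then T (n - j - 1) j else if j = n then 1 else 0)"

lemma Sp_Suc: "Sp (Suc n) j = Sp n j + Tq n j"
proof -
  consider "j < n" | "j = n" | "j > n" by linarith
  then show ?thesis
  proof cases
    case 1
    then have "Suc n - j - 1 = Suc (n - j - 1)" by auto
    then show ?thesis using 1 I1[of "n - j - 1" j] by (simp add: Sp_def Tq_def)
  next
    case 2
    then show ?thesis by (simp add: Sp_def Tq_def S0)
  next
    case 3
    then show ?thesis by (simp add: Sp_def Tq_def)
  qed
qed

lemma Tq_Suc: "1 \<le> j \<Longrightarrow> Tq (Suc n) j = Sp (Suc n) j + Tq n (j - 1)"
proof -
  assume j: "1 \<le> j"
  consider "j < Suc n" | "j = Suc n" | "j > Suc n" by linarith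
  then show ?thesis
  proof cases
    case 1
    then have e: "Suc n - j - 1 = n - (j - 1) - 1" "j - 1 < n" using j by auto
    have "T (n - j) (Suc (j - 1)) = S (n - j) (Suc (j - 1)) + T (n - j) (j - 1)" by (rule I2)
    then show ?thesis using 1 j e by (simp add: Sp_def Tq_def)
  next
    case 2
    then show ?thesis by (simp add: Sp_def Tq_def)
  next
    case 3
    then have "j - 1 > n" by auto
    then show ?thesis using 3 by (simp add: Sp_def Tq_def)
  qed
qed

lemma Tq_Suc0: "Tq (Suc n) 0 = Sp (Suc n) 0"
  by (simp add: Sp_def Tq_def I3)

lemma closed:
  assumes "1 \<le> n"
  shows "gc True n (n + j) = Sp n j \<and> gc False n (n - 1 + j) = Tq n j"
  using assms
proof (induction n arbitrary: j rule: nat_induct_at_least)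
  case base
  show ?case
    by (simp add: gc_def G1_True G1_False Sp_def Tq_def S0 T00)
next
  case (Suc n)
  have a: "gc True (Suc n) (Suc n + j) = Sp (Suc n) j"
    using gc_Suc[OF Suc.hyps(1), of True "Suc n + j"] Suc.IH[of j] Suc.hyps(1) Sp_Suc[of n j]
    by (simp add: add.commute)
  have b: "gc False (Suc n) (Suc n - 1 + j) = Tq (Suc n) j"
  proof (cases j)
    case 0
    have "(if 2 \<le> n then gc False n (n - 2) else 0) = 0" using gc_low[of "n-2" n] by auto
    then show ?thesis
      using gc_Suc[OF Suc.hyps(1), of False "n"] Suc.IH[of 0] Suc.hyps(1) Sp_Suc[of n 0] Tq_Suc0[of n] 0
      by simp
  next
    case (Suc j')
    have "gc False n (n - 1 + j') = Tq n j'" using Suc.IH by blast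
    then show ?thesis
      using gc_Suc[OF Suc.hyps(1), of False "n + j"] Suc.IH[of j] Suc.hyps(1) Sp_Suc[of n j] Tq_Suc[of j n] Suc
      by simp
  qed
  show ?case using a b by blast
qed



definition pgl :: "nat list \<Rightarrow> bool" where
  "pgl w \<longleftrightarrow> (\<forall>i j. i < j \<longrightarrow> j < length w \<longrightarrow> w ! i = 0 \<longrightarrow> w ! j = 0 \<longrightarrow>
      (\<exists>k. i < k \<and> k < j \<and> 2 \<le> w ! k))"

definition Qf :: "nat list \<Rightarrow> bool" where
  "Qf w \<longleftrightarrow> (\<forall>j < length w. w ! j = 0 \<longrightarrow> (\<exists>k < j. 2 \<le> w ! k))"

lemma pgl_Nil: "pgl []" by (simp add: pgl_def)
lemma Qf_Nil: "Qf []" by (simp add: Qf_def)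

lemma Qf_Cons: "Qf (x # w) \<longleftrightarrow> x \<noteq> 0 \<and> (2 \<le> x \<or> Qf w)"
proof
  assume a: "Qf (x # w)"
  have x0: "x \<noteq> 0" using a[unfolded Qf_def, rule_format, of 0] by auto
  moreover have "2 \<le> x \<or> Qf w"
  proof (cases "2 \<le> x")
    case False
    have "Qf w" unfolding Qf_def
    proof (intro allI impI)
      fix j assume j: "j < length w" "w ! j = 0"
      then obtain k where k: "k < Suc j" "2 \<le> (x # w) ! k" using a[unfolded Qf_def, rule_format, of "Suc j"] by auto
      then have "k \<noteq> 0" using False by (cases k) auto
      then obtain k' where "k = Suc k'" by (cases k) auto
      then show "\<exists>k<j. 2 \<le> w ! k" using k by (intro exI[of _ k']) auto
    qed
    then show ?thesis by blast
  qed auto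
  ultimately show "x \<noteq> 0 \<and> (2 \<le> x \<or> Qf w)" by blast
next
  assume a: "x \<noteq> 0 \<and> (2 \<le> x \<or> Qf w)"
  show "Qf (x # w)" unfolding Qf_def
  proof (intro allI impI)
    fix j assume j: "j < length (x # w)" "(x # w) ! j = 0"
    then obtain j' where j': "j = Suc j'" using a by (cases j) auto
    show "\<exists>k<j. 2 \<le> (x # w) ! k"
    proof (cases "2 \<le> x")
      case True
      then show ?thesis using j' by (intro exI[of _ 0]) auto
    next
      case False
      then have "Qf w" using a by blast
      then obtain k where "k < j'" "2 \<le> w ! k" using j j' unfolding Qf_def by auto
      then show ?thesis using j' by (intro exI[of _ "Suc k"]) auto
    qed
  qed
qed

lemma pgl_Cons: "pgl (x # w) \<longleftrightarrow> pgl w \<and> (x = 0 \<longrightarrow> Qf w)"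
proof
  assume a: "pgl (x # w)"
  have "pgl w" unfolding pgl_def
  proof (intro allI impI)
    fix i j assume h: "i < j" "j < length w" "w ! i = 0" "w ! j = 0"
    then obtain k where k: "Suc i < k" "k < Suc j" "2 \<le> (x # w) ! k"
      using a[unfolded pgl_def, rule_format, of "Suc i" "Suc j"] by auto
    then obtain k' where "k = Suc k'" by (cases k) auto
    then show "\<exists>k>i. k < j \<and> 2 \<le> w ! k" using k by (intro exI[of _ k']) auto
  qed
  moreover have "x = 0 \<longrightarrow> Qf w"
  proof
    assume x: "x = 0"
    show "Qf w" unfolding Qf_def
    proof (intro allI impI)
      fix j assume h: "j < length w" "w ! j = 0"
      then obtain k where k: "0 < k" "k < Suc j" "2 \<le> (x # w) ! k"
        using a[unfolded pgl_def, rule_format, of 0 "Suc j"] x by auto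
      then obtain k' where "k = Suc k'" by (cases k) auto
      then show "\<exists>k<j. 2 \<le> w ! k" using k by (intro exI[of _ k']) auto
    qed
  qed
  ultimately show "pgl w \<and> (x = 0 \<longrightarrow> Qf w)" by blast
next
  assume a: "pgl w \<and> (x = 0 \<longrightarrow> Qf w)"
  show "pgl (x # w)" unfolding pgl_def
  proof (intro allI impI)
    fix i j assume h: "i < j" "j < length (x # w)" "(x # w) ! i = 0" "(x # w) ! j = 0"
    obtain j' where j': "j = Suc j'" using h by (cases j) auto
    show "\<exists>k>i. k < j \<and> 2 \<le> (x # w) ! k"
    proof (cases i)
      case 0
      then have "x = 0" using h by auto
      then have "Qf w" using a by blast
      then obtain k where "k < j'" "2 \<le> w ! k" using h j' unfolding Qf_def by auto
      then show ?thesis using j' 0 by (intro exI[of _ "Suc k"]) auto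
    next
      case (Suc i')
      then obtain k where "i' < k" "k < j'" "2 \<le> w ! k"
        using a h j' unfolding pgl_def by auto
      then show ?thesis using j' Suc by (intro exI[of _ "Suc k"]) auto
    qed
  qed
qed

lemma valid_pgl: "\<forall>x\<in>set w. x \<le> 2 \<Longrightarrow> valid p w \<longleftrightarrow> pgl w \<and> (p \<longrightarrow> Qf w)"
proof (induction w arbitrary: p)
  case Nil
  then show ?case by (simp add: pgl_Nil Qf_Nil)
next
  case (Cons x w)
  then have x: "x = 0 \<or> x = 1 \<or> x = 2" and ih: "\<And>p. valid p w \<longleftrightarrow> pgl w \<and> (p \<longrightarrow> Qf w)" by auto
  from x show ?case
  proof (elim disjE)
    assume "x = 0"
    then show ?thesis using ih[of True] by (simp add: pgl_Cons Qf_Cons) blast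
  next
    assume "x = 1"
    then show ?thesis using ih[of p] by (simp add: pgl_Cons Qf_Cons)
  next
    assume "x = 2"
    then show ?thesis using ih[of False] by (simp add: pgl_Cons Qf_Cons)
  qed
qed


definition Ans :: "nat \<Rightarrow> nat \<Rightarrow> nat list set" where
  "Ans n t = {w. length w = n \<and> (\<forall>x\<in>set w. x \<le> 2) \<and> valid False w \<and> hd w \<noteq> 2 \<and> last w \<noteq> 2 \<and> sum_list w = t}"

lemma Ans_eq:
  assumes "2 \<le> n"
  shows "Ans n t = Cons 0 ` G True (n-1) t \<union> Cons 1 ` {w. 1 \<le> t \<and> w \<in> G False (n-1) (t-1)}"
proof (intro set_eqI iffI)
  fix w assume wG: "w \<in> Ans n t"
  obtain x w' where w0: "w = x # w'" using wG assms by (cases w) (auto simp: Ans_def)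
  have ne: "w' \<noteq> []" using wG w0 assms unfolding Ans_def by auto
  have w: "w = x # w'" "length w' = n - 1" "x \<le> 2" "\<forall>y\<in>set w'. y \<le> 2"
    "valid False (x # w')" "last w' \<noteq> 2" "x + sum_list w' = t" "x \<noteq> 2"
    using wG w0 ne unfolding Ans_def by auto
  have "x = 0 \<or> x = 1" using w(3) w(8) by auto
  then show "w \<in> Cons 0 ` G True (n-1) t \<union> Cons 1 ` {w. 1 \<le> t \<and> w \<in> G False (n-1) (t-1)}"
    using w unfolding G_def by auto
next
  fix w assume "w \<in> Cons 0 ` G True (n-1) t \<union> Cons 1 ` {w. 1 \<le> t \<and> w \<in> G False (n-1) (t-1)}"
  then show "w \<in> Ans n t" using assms unfolding G_def Ans_def by (auto split: if_splits)
qed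

lemma card_Ans:
  assumes "2 \<le> n"
  shows "card (Ans n (n - 1 + k)) = Sp n k"
proof -
  let ?t = "n - 1 + k"
  have fA: "finite (G True (n-1) ?t)" by (rule G_finite)
  have fB: "finite {w. 1 \<le> ?t \<and> w \<in> G False (n-1) (?t-1)}" by (rule finite_subset[OF _ G_finite]) auto
  have "card (Ans n ?t) = card (Cons 0 ` G True (n-1) ?t) + card (Cons 1 ` {w. 1 \<le> ?t \<and> w \<in> G False (n-1) (?t-1)})"
    unfolding Ans_eq[OF assms] by (rule card_Un_disjoint) (use fA fB in auto)
  also have "{w. 1 \<le> ?t \<and> w \<in> G False (n-1) (?t-1)} = G False (n-1) (?t-1)" using assms by auto
  also have "card (Cons 0 ` G True (n-1) ?t) + card (Cons 1 ` G False (n-1) (?t-1)) = gc True (n-1) ?t + gc False (n-1) (?t - 1)"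
    unfolding card_Cons_img gc_def by simp
  also have "\<dots> = Sp (n-1) k + Tq (n-1) k"
    using closed[of "n-1" k] assms by (simp add: algebra_simps)
  also have "\<dots> = Sp n k" using Sp_Suc[of "n-1" k] assms by simp
  finally show ?thesis .
qed

definition F :: "nat \<Rightarrow> (nat \<Rightarrow> nat) \<Rightarrow> nat list" where
  "F n c = map c [1..<Suc n]"

lemma nth_F: "i < n \<Longrightarrow> F n c ! i = c (Suc i)"
  by (simp add: F_def del: upt_Suc)

lemma length_F: "length (F n c) = n" by (simp add: F_def)

lemma pg_iff: "pg n c \<longleftrightarrow> pgl (F n c)"
proof
  assume a: "pg n c"
  show "pgl (F n c)" unfolding pgl_def length_F
  proof (intro allI impI)
    fix i j assume h: "i < j" "j < n" "F n c ! i = 0" "F n c ! j = 0"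
    then have "c (Suc i) = 0" "c (Suc j) = 0" by (auto simp: nth_F)
    then obtain k where k: "Suc i < k" "k < Suc j" "2 \<le> c k" using a[unfolded pg_def, rule_format, of "Suc i" "Suc j"] h by auto
    then obtain k' where "k = Suc k'" by (cases k) auto
    then show "\<exists>k>i. k < j \<and> 2 \<le> F n c ! k" using k h by (intro exI[of _ k']) (auto simp: nth_F)
  qed
next
  assume a: "pgl (F n c)"
  show "pg n c" unfolding pg_def
  proof (intro allI impI)
    fix i j assume h: "1 \<le> i" "i < j" "j \<le> n" "c i = 0" "c j = 0"
    obtain i' j' where ij: "i = Suc i'" "j = Suc j'" using h by (cases i; cases j) auto
    have "F n c ! i' = 0" "F n c ! j' = 0" using h ij by (auto simp: nth_F)
    then obtain k where k: "i' < k" "k < j'" "2 \<le> F n c ! k" using a[unfolded pgl_def length_F, rule_format, of i' j'] h ij by auto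
    then show "\<exists>k>i. k < j \<and> 2 \<le> c k" using k h ij by (intro exI[of _ "Suc k"]) (auto simp: nth_F)
  qed
qed

lemma set_F: "set (F n c) = c ` {1..n}"
  by (auto simp: F_def)

lemma hd_F: "1 \<le> n \<Longrightarrow> hd (F n c) = c 1"
  by (simp add: F_def hd_map upt_rec)

lemma last_F: "1 \<le> n \<Longrightarrow> last (F n c) = c n"
  by (simp add: F_def last_map)

lemma stable_iff:
  assumes "2 \<le> n" "is_config n c"
  shows "stable n c \<longleftrightarrow> (\<forall>x\<in>set (F n c). x \<le> 2) \<and> hd (F n c) \<noteq> 2 \<and> last (F n c) \<noteq> 2"
proof -
  have "stable n c \<longleftrightarrow> (\<forall>i\<in>{1..n}. c i < fan_deg n i)" using assms unfolding stable_def by blast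
  also have "\<dots> \<longleftrightarrow> (\<forall>i\<in>{1..n}. c i \<le> 2) \<and> c 1 \<noteq> 2 \<and> c n \<noteq> 2"
  proof
    assume a: "\<forall>i\<in>{1..n}. c i < fan_deg n i"
    have "\<forall>i\<in>{1..n}. c i \<le> 2" using a deg_eq[OF assms(1)] by (metis less_Suc_eq_le numeral_3_eq_3 numeral_2_eq_2 order.strict_trans2 order_le_less le_refl less_imp_le_nat)
    moreover have "c 1 \<noteq> 2" using a[rule_format, of 1] deg_eq[OF assms(1), of 1] assms(1) by auto
    moreover have "c n \<noteq> 2" using a[rule_format, of n] deg_eq[OF assms(1), of n] assms(1) by auto
    ultimately show "(\<forall>i\<in>{1..n}. c i \<le> 2) \<and> c 1 \<noteq> 2 \<and> c n \<noteq> 2" by blast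
  next
    assume a: "(\<forall>i\<in>{1..n}. c i \<le> 2) \<and> c 1 \<noteq> 2 \<and> c n \<noteq> 2"
    show "\<forall>i\<in>{1..n}. c i < fan_deg n i"
    proof
      fix i assume i: "i \<in> {1..n}"
      have "c i \<le> 2" using a i by blast
      moreover have "i = 1 \<Longrightarrow> c i \<noteq> 2" "i = n \<Longrightarrow> c i \<noteq> 2" using a by auto
      ultimately show "c i < fan_deg n i" unfolding deg_eq[OF assms(1) i] by auto
    qed
  qed
  also have "\<dots> \<longleftrightarrow> (\<forall>x\<in>set (F n c). x \<le> 2) \<and> hd (F n c) \<noteq> 2 \<and> last (F n c) \<noteq> 2"
    using assms(1) by (simp add: set_F hd_F last_F)
  finally show ?thesis .
qed

lemma sum_F: "sum_list (F n c) = (\<Sum>i\<in>{1..n}. c i)"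
  unfolding F_def interv_sum_list_conv_sum_set_nat set_upt atLeastLessThanSuc_atLeastAtMost ..

lemma level_iff:
  assumes "2 \<le> n"
  shows "level n c = int k \<longleftrightarrow> sum_list (F n c) = n - 1 + k"
proof -
  define s where "s = (\<Sum>i\<in>{1..n}. c i)"
  have "level n c = int s - (int n - 1)" unfolding level_def s_def ..
  then show ?thesis unfolding sum_F s_def[symmetric] using assms by arith
qed

lemma X_char:
  assumes "2 \<le> n"
  shows "{c. asm_recurrent n c \<and> level n c = int k} = {c. is_config n c \<and> F n c \<in> Ans n (n - 1 + k)}"
proof (intro set_eqI iffI)
  fix c assume "c \<in> {c. asm_recurrent n c \<and> level n c = int k}"
  then have a: "stable n c" "pg n c" "level n c = int k" using recurrent_iff[OF assms] by auto
  have cfg: "is_config n c" using a unfolding stable_def by blast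
  have "\<forall>x\<in>set (F n c). x \<le> 2" "hd (F n c) \<noteq> 2" "last (F n c) \<noteq> 2"
    using stable_iff[OF assms cfg] a by auto
  moreover have "valid False (F n c)" using valid_pgl[of "F n c" False] calculation(1) a(2) pg_iff by blast
  ultimately show "c \<in> {c. is_config n c \<and> F n c \<in> Ans n (n - 1 + k)}"
    using cfg level_iff[OF assms] a(3) unfolding Ans_def by (auto simp: length_F)
next
  fix c assume "c \<in> {c. is_config n c \<and> F n c \<in> Ans n (n - 1 + k)}"
  then have cfg: "is_config n c" and w: "F n c \<in> Ans n (n - 1 + k)" by auto
  have st: "stable n c" using stable_iff[OF assms cfg] w unfolding Ans_def by auto
  have "pg n c" using valid_pgl[of "F n c" False] w pg_iff unfolding Ans_def by auto
  then have "asm_recurrent n c" using recurrent_iff[OF assms] st by blast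
  moreover have "level n c = int k" using level_iff[OF assms] w unfolding Ans_def by auto
  ultimately show "c \<in> {c. asm_recurrent n c \<and> level n c = int k}" by blast
qed

lemma card_configs:
  assumes "\<And>w. w \<in> A \<Longrightarrow> length w = n"
  shows "card {c. is_config n c \<and> F n c \<in> A} = card A"
proof -
  have inj: "inj_on (F n) {c. is_config n c \<and> F n c \<in> A}"
  proof (rule inj_onI)
    fix c d assume c: "c \<in> {c. is_config n c \<and> F n c \<in> A}" and d: "d \<in> {c. is_config n c \<and> F n c \<in> A}"
      and e: "F n c = F n d"
    show "c = d"
    proof
      fix i show "c i = d i"
      proof (cases "i \<in> {1..n}")
        case True
        then obtain i' where "i = Suc i'" "i' < n" by (cases i) auto
        then show ?thesis using e nth_F[of i' n c] nth_F[of i' n d] by simp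
      next
        case False
        then show ?thesis using c d unfolding is_config_def by auto
      qed
    qed
  qed
  have img: "F n ` {c. is_config n c \<and> F n c \<in> A} = A"
  proof (intro set_eqI iffI)
    fix w assume "w \<in> F n ` {c. is_config n c \<and> F n c \<in> A}"
    then show "w \<in> A" by auto
  next
    fix w assume w: "w \<in> A"
    define c where "c = (\<lambda>i. if i \<in> {1..n} then w ! (i - 1) else 0)"
    have "F n c = w"
      by (rule nth_equalityI) (use assms[OF w] in \<open>auto simp: length_F nth_F c_def\<close>)
    moreover have "is_config n c" unfolding is_config_def c_def by auto
    ultimately show "w \<in> F n ` {c. is_config n c \<and> F n c \<in> A}" using w by force
  qed
  show ?thesis using card_image[OF inj] img by simp
qed

theorem mainTheorem17:
  fixes n k :: nat
  assumes "n \<ge> 2" and "k < n"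
  shows "card {c. asm_recurrent n c \<and> level n c = int k} =
         (\<Sum>r=0..n-k-1. ((n-k-1) choose r) * ((r+k) choose r))"
proof -
  have "card {c. asm_recurrent n c \<and> level n c = int k} = card (Ans n (n - 1 + k))"
    unfolding X_char[OF assms(1)] by (rule card_configs) (simp add: Ans_def)
  also have "\<dots> = Sp n k" by (rule card_Ans[OF assms(1)])
  also have "\<dots> = S (n - k - 1) k" using assms(2) by (simp add: Sp_def)
  also have "\<dots> = (\<Sum>r=0..n-k-1. ((n-k-1) choose r) * ((r+k) choose r))"
    unfolding S_def atLeast0AtMost
  proof (rule sum.cong[OF refl])
    fix r show "(n - k - 1 choose r) * (r + k choose k) = (n - k - 1 choose r) * (r + k choose r)"
      using binomial_symmetric[of r "r + k"] by simp
  qed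
  finally show ?thesis .
qed


end
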